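(* For any quantum seed $(X,\mathbf h,\Lambda,\widetilde B)$, $$\mathcal U(X,\mathbf h,\Lambda,\widetilde B)=\bigcap_{i=1}^n\mathbb{ZP}[X_1^{\pm1},\dots,X_{i-1}^{\pm1},X_i,X'_i,X_{i+1}^{\pm1},\dots,X_n^{\pm1}],$$ where $X'_i$ is the $i$-th cluster variable of $\mu_i(X,\mathbf h,\Lambda,\widetilde B)$.
   Context: Notation: $[a,b]=\{a,a+1,\dots,b\}$; $[x]_+=\max(x,0)$, applied entrywise to vectors; $e_1,\dots,e_m$ is the standard basis of $\mathbb Z^m$. Fix integers $m\ge n\ge 1$. A compatible pair $(\Lambda,\widetilde B)$ consists of an $m\times n$ integer matrix $\widetilde B=(b_{kl})$ and a skew-symmetric $m\times m$ integer matrix $\Lambda$ such that $\Lambda\widetilde B=-\begin{bmatrix}D\\0\end{bmatrix}$ for some $D=\mathrm{diag}(\tilde d_1,\dots,\tilde d_n)$ with all $\tilde d_k\in\mathbb Z_{>0}$. Write $\Lambda(a,b)=a^T\Lambda b$. Fix positive integers $d_1,\dots,d_n$ such that $d_k$ divides every entry of the $k$-th column $b^k$ of $\widetilde B$ (preserved under mutation); $\beta^k=\frac1{d_k}b^k$. The quantum torus $\mathcal T(\Lambda)$ is the $\mathbb Z[q^{\pm1/2}]$-algebra with basis $\{X(c)\mid c\in\mathbb Z^m\}$ and multiplication $X(c)X(d)=q^{\frac12\Lambda(c,d)}X(c+d)$; $\mathcal F$ is its skew field of fractions, $X_k=X(e_k)$. For $k\in[1,n]$, $\mathbf h_k=(h_{k,0},\dots,h_{k,d_k})$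 with $h_{k,r}\in\mathbb Z[q^{\pm1/2}]$, $h_{k,r}=h_{k,d_k-r}$, $h_{k,0}=h_{k,d_k}=1$. A quantum seed $(X,\mathbf h,\Lambda,\widetilde B)$ consists of a compatible pair, $\mathbf h$, and a map $X:\mathbb Z^m\to\mathcal F$ with $X(c)X(d)=q^{\frac12\Lambda(c,d)}X(c+d)$. Mutation in direction $i$: $\mu_i(X,\mathbf h,\Lambda,\widetilde B)=(X',\mathbf h,E^T\Lambda E,E\widetilde BF)$ where $E_{kl}=\delta_{kl}$ ($l\neq i$), $E_{ii}=-1$, $E_{ki}=[-\varepsilon b_{ki}]_+$ ($k\ne i$), $F_{kl}=\delta_{kl}$ ($k\ne i$), $F_{ii}=-1$, $F_{il}=[\varepsilon b_{il}]_+$ ($l\ne i$), $\varepsilon\in\{\pm1\}$ arbitrary, and $X'$ is determined by $X'(e_k)=X(e_k)$ ($k\ne i$) and $X'(e_i)=\sum_{r=0}^{d_i}h_{i,r}X(r[\beta^i]_++(d_i-r)[-\beta^i]_+-e_i)$; write $X'_k=X'(e_k)$. $\mathbb{ZP}$ is the ring of Laurent polynomials in $X_{n+1},\dots,X_m$ with coefficients in $\mathbb Z[q^{\pm1/2}]$; for $Y_1,\dots,Y_s\in\mathcal F$, $\mathbb{ZP}[Y_1,\dots,Y_s]$ is the subring of $\mathcal F$ generated by $\mathbb{ZP}$ and the $Y_k$ (exponent $\pm1$ means both $Y$ and $Y^{-1}$ are adjoined). For a seed $\Sigma=(X,\mathbf h,\Lambda,\widetilde B)$ let $\mathbb L(\Sigma)=\mathbb{ZP}[X_1^{\pm1},\dots,X_n^{\pm1}]$;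 the upper bound is $\mathcal U(\Sigma)=\mathbb L(\Sigma)\cap\bigcap_{i=1}^n\mathbb L(\mu_i(\Sigma))$. *)

theory Defs
  imports Main
begin

text \<open>Integer vectors in Z^m are modelled as functions nat => int supported on [1,m].
  Matrices are functions nat => nat => int (row index, column index), 1-based.\<close>

definition lattice :: "nat \<Rightarrow> (nat \<Rightarrow> int) set" where
  "lattice m = {c. \<forall>k. c k \<noteq> 0 \<longrightarrow> k \<in> {1..m}}"

definition unitvec :: "nat \<Rightarrow> nat \<Rightarrow> int" ("\<ee>") where
  "unitvec i = (\<lambda>j. if j = i then 1 else 0)"

definition posp :: "(nat \<Rightarrow> int) \<Rightarrow> nat \<Rightarrow> int" where
  "posp c = (\<lambda>k. max (c k) 0)"

definition bilin :: "nat \<Rightarrow> (nat \<Rightarrow> nat \<Rightarrow> int) \<Rightarrow> (nat \<Rightarrow> int) \<Rightarrow> (nat \<Rightarrow> int) \<Rightarrow> int" where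
  "bilin m L a b = (\<Sum>k\<in>{1..m}. \<Sum>l\<in>{1..m}. a k * L k l * b l)"

definition skew_symmetric :: "nat \<Rightarrow> (nat \<Rightarrow> nat \<Rightarrow> int) \<Rightarrow> bool" where
  "skew_symmetric m L \<longleftrightarrow> (\<forall>k\<in>{1..m}. \<forall>l\<in>{1..m}. L k l = - L l k)"

definition compatible_pair ::
  "nat \<Rightarrow> nat \<Rightarrow> (nat \<Rightarrow> nat \<Rightarrow> int) \<Rightarrow> (nat \<Rightarrow> nat \<Rightarrow> int) \<Rightarrow> bool" where
  "compatible_pair m n L B \<longleftrightarrow> skew_symmetric m L \<and>
     (\<exists>D :: nat \<Rightarrow> int. (\<forall>l\<in>{1..n}. D l > 0) \<and>
        (\<forall>k\<in>{1..m}. \<forall>l\<in>{1..n}.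
            (\<Sum>j\<in>{1..m}. L k j * B j l) = (if k = l then - D l else 0)))"

definition beta :: "nat \<Rightarrow> (nat \<Rightarrow> nat \<Rightarrow> int) \<Rightarrow> (nat \<Rightarrow> nat) \<Rightarrow> nat \<Rightarrow> nat \<Rightarrow> int" where
  "beta m B d k = (\<lambda>j. if j \<in> {1..m} then B j k div int (d k) else 0)"

text \<open>The ring Z[q^{+-1/2}] realised inside the ambient division ring, with t = q^{1/2}.\<close>
definition laurent_coeffs :: "'f::division_ring \<Rightarrow> 'f set" where
  "laurent_coeffs t = {\<Sum>j\<in>J. of_int (a j) * t powi j | J a. finite J}"

text \<open>The Z[q^{+-1/2}]-span of a toric frame X (the image of the quantum torus).\<close>
definition torus_span :: "nat \<Rightarrow> 'f::division_ring \<Rightarrow> ((nat \<Rightarrow> int) \<Rightarrow> 'f) \<Rightarrow> 'f set" where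
  "torus_span m t X = {\<Sum>p\<in>S. of_int (a p) * t powi (snd p) * X (fst p) | S a.
       finite S \<and> S \<subseteq> lattice m \<times> UNIV}"

text \<open>A quantum seed (X, h, Lambda, Btilde) in the skew field F (a division ring), where
  t is q^{1/2}, which is central, and X is a toric frame: it satisfies the quasi-commutation
  rule, the elements t^j X(c) are Z-linearly independent (so X embeds the quantum torus
  T(Lambda) over Z[q^{+-1/2}], q an indeterminate) and F is the skew field of fractions
  of that quantum torus.  d fixes the positive integers d_k dividing the k-th column.\<close>
definition quantum_seed ::
  "nat \<Rightarrow> nat \<Rightarrow> 'f::division_ring \<Rightarrow> ((nat \<Rightarrow> int) \<Rightarrow> 'f) \<Rightarrow> (nat \<Rightarrow> nat \<Rightarrow> 'f) \<Rightarrow> (nat \<Rightarrow> nat)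
     \<Rightarrow> (nat \<Rightarrow> nat \<Rightarrow> int) \<Rightarrow> (nat \<Rightarrow> nat \<Rightarrow> int) \<Rightarrow> bool" where
  "quantum_seed m n t X h d L B \<longleftrightarrow>
     1 \<le> n \<and> n \<le> m \<and>
     compatible_pair m n L B \<and>
     (\<forall>k\<in>{1..n}. d k > 0 \<and> (\<forall>j\<in>{1..m}. int (d k) dvd B j k)) \<and>
     (\<forall>k\<in>{1..n}. (\<forall>r\<le>d k. h k r \<in> laurent_coeffs t \<and> h k r = h k (d k - r))
                     \<and> h k 0 = 1 \<and> h k (d k) = 1) \<and>
     (\<forall>x. t * x = x * t) \<and>
     (\<forall>c\<in>lattice m. \<forall>c'\<in>lattice m. X c * X c' = t powi (bilin m L c c') * X (\<lambda>k. c k + c' k)) \<and>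
     (\<forall>S a. finite S \<longrightarrow> S \<subseteq> lattice m \<times> UNIV \<longrightarrow>
         (\<Sum>p\<in>S. of_int (a p) * t powi (snd p) * X (fst p)) = 0 \<longrightarrow> (\<forall>p\<in>S. a p = 0)) \<and>
     (\<forall>y. \<exists>u\<in>torus_span m t X. \<exists>v\<in>torus_span m t X. v \<noteq> 0 \<and> y = u * inverse v)"

inductive_set subring_gen :: "'a::ring_1 set \<Rightarrow> 'a set" for S :: "'a set" where
  gen: "x \<in> S \<Longrightarrow> x \<in> subring_gen S"
| one: "1 \<in> subring_gen S"
| diff: "x \<in> subring_gen S \<Longrightarrow> y \<in> subring_gen S \<Longrightarrow> x - y \<in> subring_gen S"
| mult: "x \<in> subring_gen S \<Longrightarrow> y \<in> subring_gen S \<Longrightarrow> x * y \<in> subring_gen S"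

text \<open>Generators of ZP: scalars q^{+-1/2} and the frozen variables X_{n+1..m} with inverses.\<close>
definition ZP_gens :: "nat \<Rightarrow> nat \<Rightarrow> 'f::division_ring \<Rightarrow> ((nat \<Rightarrow> int) \<Rightarrow> 'f) \<Rightarrow> 'f set" where
  "ZP_gens m n t X = {t, inverse t} \<union> (\<Union>k\<in>{n+1..m}. {X (\<ee> k), inverse (X (\<ee> k))})"

definition mutated_var ::
  "nat \<Rightarrow> ((nat \<Rightarrow> int) \<Rightarrow> 'f::division_ring) \<Rightarrow> (nat \<Rightarrow> nat \<Rightarrow> 'f) \<Rightarrow> (nat \<Rightarrow> nat)
     \<Rightarrow> (nat \<Rightarrow> nat \<Rightarrow> int) \<Rightarrow> nat \<Rightarrow> 'f" where
  "mutated_var m X h d B i =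
     (\<Sum>r\<in>{0..d i}. h i r *
        X (\<lambda>j. int r * posp (beta m B d i) j
               + int (d i - r) * posp (\<lambda>l. - beta m B d i l) j - \<ee> i j))"

definition L_ring :: "nat \<Rightarrow> nat \<Rightarrow> 'f::division_ring \<Rightarrow> ((nat \<Rightarrow> int) \<Rightarrow> 'f) \<Rightarrow> 'f set" where
  "L_ring m n t X = subring_gen (ZP_gens m n t X \<union>
      (\<Union>k\<in>{1..n}. {X (\<ee> k), inverse (X (\<ee> k))}))"

definition L_mut_ring ::
  "nat \<Rightarrow> nat \<Rightarrow> 'f::division_ring \<Rightarrow> ((nat \<Rightarrow> int) \<Rightarrow> 'f) \<Rightarrow> (nat \<Rightarrow> nat \<Rightarrow> 'f) \<Rightarrow> (nat \<Rightarrow> nat)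
     \<Rightarrow> (nat \<Rightarrow> nat \<Rightarrow> int) \<Rightarrow> nat \<Rightarrow> 'f set" where
  "L_mut_ring m n t X h d B i = subring_gen (ZP_gens m n t X \<union>
      (\<Union>k\<in>{1..n} - {i}. {X (\<ee> k), inverse (X (\<ee> k))}) \<union>
      {mutated_var m X h d B i, inverse (mutated_var m X h d B i)})"

definition upper_bound ::
  "nat \<Rightarrow> nat \<Rightarrow> 'f::division_ring \<Rightarrow> ((nat \<Rightarrow> int) \<Rightarrow> 'f) \<Rightarrow> (nat \<Rightarrow> nat \<Rightarrow> 'f) \<Rightarrow> (nat \<Rightarrow> nat)
     \<Rightarrow> (nat \<Rightarrow> nat \<Rightarrow> int) \<Rightarrow> 'f set" where
  "upper_bound m n t X h d B = L_ring m n t X \<inter> (\<Inter>i\<in>{1..n}. L_mut_ring m n t X h d B i)"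

end

theory Submission
  imports Defs
begin


lemma ofint_mult4: "of_int a * M1 * (of_int b * M2) = of_int (a * b) * (M1 * (M2::'f::ring_1))"
proof -
  have "of_int a * M1 * (of_int b * M2) = of_int a * (M1 * of_int b) * M2" by (simp add: mult.assoc)
  also have "M1 * of_int b = of_int b * M1" by (rule mult_of_int_commute[symmetric])
  finally show ?thesis by (simp add: mult.assoc)
qed

lemma sum_if_restrict: "finite B \<Longrightarrow> A \<subseteq> B \<Longrightarrow> (\<Sum>x\<in>B. if x \<in> A then g x else 0) = (\<Sum>x\<in>A. g x)"
  by (rule sum.mono_neutral_cong_right) auto

locale qseed =
  fixes m n :: nat and t :: "'f::division_ring" and X :: "(nat \<Rightarrow> int) \<Rightarrow> 'f"
    and h :: "nat \<Rightarrow> nat \<Rightarrow> 'f" and d :: "nat \<Rightarrow> nat"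
    and L B :: "nat \<Rightarrow> nat \<Rightarrow> int"
  assumes qs: "quantum_seed m n t X h d L B"
begin

lemmas QS = qs[unfolded quantum_seed_def]
lemmas QS1 = QS[THEN conjunct1] and QS2 = QS[THEN conjunct2, THEN conjunct1]
  and QS3 = QS[THEN conjunct2, THEN conjunct2, THEN conjunct1]
  and QS4 = QS[THEN conjunct2, THEN conjunct2, THEN conjunct2, THEN conjunct1]
  and QS5 = QS[THEN conjunct2, THEN conjunct2, THEN conjunct2, THEN conjunct2, THEN conjunct1]
  and QS6 = QS[THEN conjunct2, THEN conjunct2, THEN conjunct2, THEN conjunct2, THEN conjunct2, THEN conjunct1]
  and QS7 = QS[THEN conjunct2, THEN conjunct2, THEN conjunct2, THEN conjunct2, THEN conjunct2, THEN conjunct2, THEN conjunct1]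
  and QS8 = QS[THEN conjunct2, THEN conjunct2, THEN conjunct2, THEN conjunct2, THEN conjunct2, THEN conjunct2, THEN conjunct2, THEN conjunct1]

lemma central: "t * x = x * t"
  using QS6 by blast

lemma Xmult: "c \<in> lattice m \<Longrightarrow> c' \<in> lattice m \<Longrightarrow>
   X c * X c' = t powi (bilin m L c c') * X (\<lambda>k. c k + c' k)"
  using QS7 by blast

lemma indep: "finite S \<Longrightarrow> S \<subseteq> lattice m \<times> UNIV \<Longrightarrow>
   (\<Sum>p\<in>S. of_int (a p) * t powi (snd p) * X (fst p)) = 0 \<Longrightarrow> p \<in> S \<Longrightarrow> a p = 0"
  using QS8 by blast

lemma nm: "1 \<le> n" "n \<le> m" using QS1 QS2 by auto

lemma skew: "k \<in> {1..m} \<Longrightarrow> l \<in> {1..m} \<Longrightarrow> L k l = - L l k"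
  using QS3 unfolding compatible_pair_def skew_symmetric_def by blast

lemma compat: "\<exists>D :: nat \<Rightarrow> int. (\<forall>l\<in>{1..n}. D l > 0) \<and>
        (\<forall>k\<in>{1..m}. \<forall>l\<in>{1..n}.
            (\<Sum>j\<in>{1..m}. L k j * B j l) = (if k = l then - D l else 0))"
  using QS3 unfolding compatible_pair_def by blast

lemma dpos: "k \<in> {1..n} \<Longrightarrow> d k > 0"
  and ddvd: "k \<in> {1..n} \<Longrightarrow> j \<in> {1..m} \<Longrightarrow> int (d k) dvd B j k"
  using QS4 by blast+

lemma hprops: "k \<in> {1..n} \<Longrightarrow> r \<le> d k \<Longrightarrow> h k r \<in> laurent_coeffs t"
  "k \<in> {1..n} \<Longrightarrow> h k 0 = 1" "k \<in> {1..n} \<Longrightarrow> h k (d k) = 1"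
  using QS5 by blast+

lemma zero_lattice: "(\<lambda>_. 0) \<in> lattice m" by (simp add: lattice_def)

lemma lattice_add: "c \<in> lattice m \<Longrightarrow> c' \<in> lattice m \<Longrightarrow> (\<lambda>k. c k + c' k) \<in> lattice m"
  unfolding lattice_def by (auto, (metis add.right_neutral)+)

lemma lattice_uminus: "c \<in> lattice m \<Longrightarrow> (\<lambda>k. - c k) \<in> lattice m"
  by (auto simp: lattice_def)

lemma unit_lattice: "k \<in> {1..m} \<Longrightarrow> \<ee> k \<in> lattice m"
  by (auto simp: lattice_def unitvec_def)

lemma X_ne0: assumes "c \<in> lattice m" shows "X c \<noteq> 0"
proof
  assume "X c = 0"
  hence "(\<Sum>p\<in>{(c,0::int)}. of_int ((\<lambda>_. 1) p) * t powi (snd p) * X (fst p)) = 0" by simp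
  from indep[OF _ _ this] assms show False by auto
qed

lemma t_ne0: "t \<noteq> 0"
proof
  assume "t = 0"
  hence "(\<Sum>p\<in>{((\<lambda>_. 0::int),1::int)}. of_int ((\<lambda>_. 1) p) * t powi (snd p) * X (fst p)) = 0" by simp
  from indep[OF _ _ this] zero_lattice show False by auto
qed

lemma bilin_zero: "bilin m L c (\<lambda>_. 0) = 0" "bilin m L (\<lambda>_. 0) c = 0"
  by (simp_all add: bilin_def)

lemma X0: "X (\<lambda>_. 0) = 1"
proof -
  have "X (\<lambda>_. 0) * X (\<lambda>_. 0) = X (\<lambda>_. 0)"
    using Xmult[OF zero_lattice zero_lattice] by (simp add: bilin_zero)
  hence "X (\<lambda>_. 0) * X (\<lambda>_. 0) = 1 * X (\<lambda>_. 0)" by simp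
  thus ?thesis using X_ne0[OF zero_lattice] by (metis mult_right_cancel)
qed

lemma bilin_skew: assumes "c \<in> lattice m" "c' \<in> lattice m" shows "bilin m L c c' = - bilin m L c' c"
proof -
  have "bilin m L c c' = (\<Sum>k\<in>{1..m}. \<Sum>l\<in>{1..m}. c k * L k l * c' l)" by (simp add: bilin_def)
  also have "\<dots> = (\<Sum>l\<in>{1..m}. \<Sum>k\<in>{1..m}. c k * L k l * c' l)" by (rule sum.swap)
  also have "\<dots> = (\<Sum>l\<in>{1..m}. \<Sum>k\<in>{1..m}. - (c' l * L l k * c k))"
  proof (intro sum.cong refl)
    fix l k assume "l \<in> {1..m}" "k \<in> {1..m}"
    thus "c k * L k l * c' l = - (c' l * L l k * c k)" using skew[of k l] by simp
  qed
  also have "\<dots> = - bilin m L c' c" by (simp add: bilin_def sum_negf)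
  finally show ?thesis .
qed

lemma tpow_central: "t powi j * x = x * t powi j"
proof -
  have p: "t ^ k * x = x * t ^ k" for k x
    by (induction k) (simp_all, metis central mult.assoc)
  have i: "inverse t * x = x * inverse t" for x
  proof -
    have "t * (inverse t * x * t) = t * (x * inverse t * t)"
      using t_ne0 by (simp add: mult.assoc[symmetric] central) (metis central mult.assoc right_inverse mult_1_right mult_1_left)
    hence "inverse t * x * t = x * inverse t * t" using t_ne0 by simp
    thus ?thesis using t_ne0 by (metis mult_right_cancel)
  qed
  have "inverse t ^ k * x = x * inverse t ^ k" for k
    by (induction k) (simp_all, metis i mult.assoc)
  thus ?thesis using p by (simp add: power_int_def)
qed

lemma tpow_add: "t powi a * t powi b = t powi (a + b)"
  using t_ne0 by (simp add: power_int_add)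

lemma Xcomm: assumes "c \<in> lattice m" "c' \<in> lattice m"
  shows "X c * X c' = t powi (2 * bilin m L c c') * X c' * X c"
proof -
  have a: "X c * X c' = t powi (bilin m L c c') * X (\<lambda>k. c k + c' k)" using Xmult assms by blast
  have b: "X c' * X c = t powi (- bilin m L c c') * X (\<lambda>k. c k + c' k)"
    using Xmult[OF assms(2,1)] bilin_skew[OF assms] by (simp add: add.commute)
  have "t powi (2 * bilin m L c c') * X c' * X c = t powi (2 * bilin m L c c') * (X c' * X c)"
    by (simp add: mult.assoc)
  also have "\<dots> = (t powi (2 * bilin m L c c') * t powi (- bilin m L c c')) * X (\<lambda>k. c k + c' k)"
    by (simp add: b mult.assoc)
  also have "\<dots> = X c * X c'" by (simp add: tpow_add a)
  finally show ?thesis by simp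
qed

lemma bilin_unit_unit: assumes k: "k \<in> {1..m}" shows "bilin m L (\<ee> k) (\<lambda>j. - \<ee> k j) = 0"
proof -
  have Lk: "L k k = 0" using skew[OF k k] by simp
  show ?thesis unfolding bilin_def
    by (intro sum.neutral ballI) (simp add: unitvec_def Lk)
qed

lemma X_neg_unit: assumes k: "k \<in> {1..m}" shows "X (\<lambda>j. - \<ee> k j) = inverse (X (\<ee> k))"
proof -
  have "X (\<ee> k) * X (\<lambda>j. - \<ee> k j) = X (\<lambda>_. 0)"
    using Xmult[OF unit_lattice[OF k] lattice_uminus[OF unit_lattice[OF k]]] bilin_unit_unit[OF k] by simp
  hence "X (\<ee> k) * X (\<lambda>j. - \<ee> k j) = 1" by (simp add: X0)
  thus ?thesis by (metis inverse_unique)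
qed

lemma B_diag: assumes i: "i \<in> {1..n}" shows "B i i = 0"
proof -
  obtain D where Dp: "\<forall>l\<in>{1..n}. D l > (0::int)" and DE: "\<forall>k\<in>{1..m}. \<forall>l\<in>{1..n}.
            (\<Sum>j\<in>{1..m}. L k j * B j l) = (if k = l then - D l else 0)" using compat by blast
  have im: "i \<in> {1..m}" using i nm by auto
  define b where "b = (\<lambda>j. if j \<in> {1..m} then B j i else 0)"
  have bl: "b \<in> lattice m" by (auto simp: b_def lattice_def split: if_splits)
  have "bilin m L b b = 0" using bilin_skew[OF bl bl] by simp
  moreover have "bilin m L b b = (\<Sum>k\<in>{1..m}. B k i * (\<Sum>j\<in>{1..m}. L k j * B j i))"
    by (simp add: bilin_def b_def sum_distrib_left mult.assoc)
  moreover have "\<dots> = (\<Sum>k\<in>{1..m}. (if k = i then - B i i * D i else 0))"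
    using DE i by (intro sum.cong refl) auto
  moreover have "\<dots> = - B i i * D i" using im by simp
  moreover have "D i > 0" using Dp i by blast
  ultimately show ?thesis by simp
qed

definition Tp :: "nat \<Rightarrow> (int \<Rightarrow> bool) \<Rightarrow> 'f set" where
  "Tp j P = {\<Sum>p\<in>S. of_int (a p) * t powi (snd p) * X (fst p) | S a.
       finite S \<and> S \<subseteq> {c \<in> lattice m. P (c j)} \<times> UNIV}"

lemma TpI: "finite S \<Longrightarrow> S \<subseteq> {c \<in> lattice m. P (c j)} \<times> UNIV \<Longrightarrow>
  x = (\<Sum>p\<in>S. of_int (a p) * t powi (snd p) * X (fst p)) \<Longrightarrow> x \<in> Tp j P"
  unfolding Tp_def by blast

lemma Tp_zero: "0 \<in> Tp j P"
  unfolding Tp_def by (rule CollectI, rule exI[of _ "{}"]) auto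

lemma Tp_mono: "c \<in> lattice m \<Longrightarrow> P (c j) \<Longrightarrow> t powi k * X c \<in> Tp j P"
  unfolding Tp_def by (rule CollectI, rule exI[of _ "{(c,k)}"], rule exI[of _ "\<lambda>_. 1"]) auto

lemma Tp_add: assumes "x \<in> Tp j P" "y \<in> Tp j P" shows "x + y \<in> Tp j P"
proof -
  obtain S1 a1 where 1: "x = (\<Sum>p\<in>S1. of_int (a1 p) * t powi (snd p) * X (fst p))" "finite S1"
    "S1 \<subseteq> {c \<in> lattice m. P (c j)} \<times> UNIV" using assms(1) unfolding Tp_def by blast
  obtain S2 a2 where 2: "y = (\<Sum>p\<in>S2. of_int (a2 p) * t powi (snd p) * X (fst p))" "finite S2"
    "S2 \<subseteq> {c \<in> lattice m. P (c j)} \<times> UNIV" using assms(2) unfolding Tp_def by blast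
  let ?f = "\<lambda>a p. of_int (a p) * t powi (snd p) * X (fst p)"
  define a where "a = (\<lambda>p. (if p \<in> S1 then a1 p else 0) + (if p \<in> S2 then a2 p else 0))"
  have "(\<Sum>p\<in>S1 \<union> S2. ?f a p) = (\<Sum>p\<in>S1 \<union> S2. (if p \<in> S1 then ?f a1 p else 0))
      + (\<Sum>p\<in>S1 \<union> S2. (if p \<in> S2 then ?f a2 p else 0))"
    by (unfold sum.distrib[symmetric], intro sum.cong refl) (auto simp: a_def distrib_right)
  also have "\<dots> = x + y" using 1 2 by (simp add: sum_if_restrict)
  finally show ?thesis using 1 2 by (intro TpI[of "S1 \<union> S2" P j _ a]) auto
qed

lemma Tp_ofint: assumes "x \<in> Tp j P" shows "of_int k * x \<in> Tp j P"
proof -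
  obtain S1 a1 where 1: "x = (\<Sum>p\<in>S1. of_int (a1 p) * t powi (snd p) * X (fst p))" "finite S1"
    "S1 \<subseteq> {c \<in> lattice m. P (c j)} \<times> UNIV" using assms(1) unfolding Tp_def by blast
  have "of_int k * x = (\<Sum>p\<in>S1. of_int (k * a1 p) * t powi (snd p) * X (fst p))"
    by (simp add: 1 sum_distrib_left mult.assoc)
  thus ?thesis using 1 by (intro TpI[of S1 P j _ "\<lambda>p. k * a1 p"]) auto
qed

lemma Tp_neg: "x \<in> Tp j P \<Longrightarrow> - x \<in> Tp j P"
  using Tp_ofint[of x j P "-1"] by simp

lemma Tp_diff: "x \<in> Tp j P \<Longrightarrow> y \<in> Tp j P \<Longrightarrow> x - y \<in> Tp j P"
  using Tp_add Tp_neg by (metis diff_conv_add_uminus)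

lemma Tp_sum: "finite F \<Longrightarrow> (\<And>a. a \<in> F \<Longrightarrow> g a \<in> Tp j P) \<Longrightarrow> (\<Sum>a\<in>F. g a) \<in> Tp j P"
  by (induction F rule: finite_induct) (auto intro: Tp_zero Tp_add)

lemma Tp_weaken: assumes "x \<in> Tp j P" "\<And>z. P z \<Longrightarrow> Q z" shows "x \<in> Tp j Q"
proof -
  obtain S a where 1: "x = (\<Sum>p\<in>S. of_int (a p) * t powi (snd p) * X (fst p))" "finite S"
    "S \<subseteq> {c \<in> lattice m. P (c j)} \<times> UNIV" using assms(1) unfolding Tp_def by blast
  have "S \<subseteq> {c \<in> lattice m. Q (c j)} \<times> UNIV" using 1(3) assms(2) by auto
  thus ?thesis using 1 by (intro TpI[of S Q j x a]) auto
qed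

lemma Tp_elim: assumes "x \<in> Tp j P"
  obtains S a where "x = (\<Sum>p\<in>S. of_int (a p) * (t powi (snd p) * X (fst p)))" "finite S"
    "\<And>p. p \<in> S \<Longrightarrow> fst p \<in> lattice m \<and> P (fst p j)"
proof -
  obtain S a where 1: "x = (\<Sum>p\<in>S. of_int (a p) * t powi (snd p) * X (fst p))" "finite S"
    "S \<subseteq> {c \<in> lattice m. P (c j)} \<times> UNIV" using assms unfolding Tp_def by blast
  show ?thesis
  proof (rule that[of a S])
    show "x = (\<Sum>p\<in>S. of_int (a p) * (t powi (snd p) * X (fst p)))" using 1 by (simp add: mult.assoc)
  qed (use 1 in force)+
qed

lemma Tp_mult: assumes "x \<in> Tp j P" "y \<in> Tp j Q" "\<And>a b. P a \<Longrightarrow> Q b \<Longrightarrow> R (a + b)"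
  shows "x * y \<in> Tp j R"
proof -
  obtain S1 a1 where 1: "x = (\<Sum>p\<in>S1. of_int (a1 p) * (t powi (snd p) * X (fst p)))" "finite S1"
    "\<And>p. p \<in> S1 \<Longrightarrow> fst p \<in> lattice m \<and> P (fst p j)" using Tp_elim[OF assms(1)] by blast
  obtain S2 a2 where 2: "y = (\<Sum>p\<in>S2. of_int (a2 p) * (t powi (snd p) * X (fst p)))" "finite S2"
    "\<And>p. p \<in> S2 \<Longrightarrow> fst p \<in> lattice m \<and> Q (fst p j)" using Tp_elim[OF assms(2)] by blast
  have mono: "(t powi k * X c) * (t powi k' * X c') \<in> Tp j R"
    if "c \<in> lattice m" "c' \<in> lattice m" "P (c j)" "Q (c' j)" for c c' k k'
  proof -
    have a: "X c * t powi k' = t powi k' * X c" by (rule tpow_central[symmetric])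
    have "(t powi k * X c) * (t powi k' * X c') = t powi k * (X c * t powi k') * X c'"
      by (simp add: mult.assoc)
    also have "\<dots> = t powi k * t powi k' * (X c * X c')" by (simp add: a mult.assoc)
    also have "\<dots> = t powi (k + k' + bilin m L c c') * X (\<lambda>i. c i + c' i)"
      by (simp add: Xmult that tpow_add flip: mult.assoc)
    finally show ?thesis using Tp_mono[of "\<lambda>i. c i + c' i" R j] that assms(3) lattice_add by auto
  qed
  have "x * y = (\<Sum>p\<in>S1. of_int (a1 p) * (t powi (snd p) * X (fst p)) * y)"
    by (simp add: 1(1) sum_distrib_right)
  also have "\<dots> = (\<Sum>p\<in>S1. \<Sum>q\<in>S2. of_int (a1 p) * (t powi (snd p) * X (fst p)) * (of_int (a2 q) * (t powi (snd q) * X (fst q))))"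
    by (simp add: 2(1) sum_distrib_left)
  also have "\<dots> = (\<Sum>p\<in>S1. \<Sum>q\<in>S2. of_int (a1 p * a2 q) * ((t powi (snd p) * X (fst p)) * (t powi (snd q) * X (fst q))))"
    by (intro sum.cong refl) (rule ofint_mult4)
  also have "\<dots> \<in> Tp j R"
    using 1 2 by (intro Tp_sum Tp_ofint mono) auto
  finally show ?thesis .
qed

lemma Tp_disj: assumes "x \<in> Tp j P" "x \<in> Tp j Q" "\<And>z. \<not> (P z \<and> Q z)" shows "x = 0"
proof -
  obtain S1 a1 where 1: "x = (\<Sum>p\<in>S1. of_int (a1 p) * t powi (snd p) * X (fst p))" "finite S1"
    "S1 \<subseteq> {c \<in> lattice m. P (c j)} \<times> UNIV" using assms(1) unfolding Tp_def by blast
  obtain S2 a2 where 2: "x = (\<Sum>p\<in>S2. of_int (a2 p) * t powi (snd p) * X (fst p))" "finite S2"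
    "S2 \<subseteq> {c \<in> lattice m. Q (c j)} \<times> UNIV" using assms(2) unfolding Tp_def by blast
  have dj: "S1 \<inter> S2 = {}" using 1(3) 2(3) assms(3) by auto
  let ?f = "\<lambda>a p. of_int (a p) * t powi (snd p) * X (fst p)"
  define a where "a = (\<lambda>p. if p \<in> S1 then a1 p else - a2 p)"
  have "(\<Sum>p\<in>S1 \<union> S2. ?f a p) = (\<Sum>p\<in>S1. ?f a p) + (\<Sum>p\<in>S2. ?f a p)"
    using dj 1 2 by (simp add: sum.union_disjoint)
  also have "\<dots> = x - x"
  proof -
    have e1: "(\<Sum>p\<in>S1. ?f a p) = x" unfolding 1(1) by (intro sum.cong refl) (simp add: a_def)
    have "(\<Sum>p\<in>S2. ?f a p) = (\<Sum>p\<in>S2. - ?f a2 p)" using dj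
      by (intro sum.cong refl) (auto simp: a_def)
    also have "\<dots> = - x" by (simp add: sum_negf 2(1)[symmetric])
    finally show ?thesis using e1 by simp
  qed
  finally have "(\<Sum>p\<in>S1 \<union> S2. ?f a p) = 0" by simp
  hence "\<forall>p\<in>S1. a p = 0" using indep[of "S1 \<union> S2" a] 1 2 by blast
  hence "\<forall>p\<in>S1. a1 p = 0" by (auto simp: a_def)
  thus ?thesis using 1(1) by simp
qed

end



lemma sg_zero: "0 \<in> subring_gen S"
  using subring_gen.diff[OF subring_gen.one subring_gen.one] by simp

lemma sg_neg: "x \<in> subring_gen S \<Longrightarrow> - x \<in> subring_gen S"
  using subring_gen.diff[OF sg_zero] by fastforce

lemma sg_add: "x \<in> subring_gen S \<Longrightarrow> y \<in> subring_gen S \<Longrightarrow> x + y \<in> subring_gen S"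
  using subring_gen.diff[OF _ sg_neg] by fastforce

lemma sg_sum: "finite F \<Longrightarrow> (\<And>a. a \<in> F \<Longrightarrow> g a \<in> subring_gen S) \<Longrightarrow> (\<Sum>a\<in>F. g a) \<in> subring_gen S"
  by (induction F rule: finite_induct) (auto intro: sg_zero sg_add)

lemma sg_pow: "x \<in> subring_gen S \<Longrightarrow> x ^ k \<in> subring_gen S"
  by (induction k) (auto intro: subring_gen.one subring_gen.mult)

lemma sg_of_nat: "of_nat k \<in> subring_gen S"
  by (induction k) (auto intro: subring_gen.one sg_zero sg_add)

lemma sg_of_int: "of_int k \<in> subring_gen S"
proof (cases "k \<ge> 0")
  case True then have "of_int k = (of_nat (nat k) :: 'a)" by simp
  thus ?thesis using sg_of_nat by metis
next
  case False then have "of_int k = - (of_nat (nat (-k)) :: 'a)" by simp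
  thus ?thesis using sg_neg[OF sg_of_nat] by metis
qed

lemma sg_closed:
  assumes "S \<subseteq> R" "1 \<in> R" "\<And>x y. x \<in> R \<Longrightarrow> y \<in> R \<Longrightarrow> x - y \<in> R"
    "\<And>x y. x \<in> R \<Longrightarrow> y \<in> R \<Longrightarrow> x * y \<in> R"
  shows "subring_gen S \<subseteq> R"
proof
  fix x assume "x \<in> subring_gen S" thus "x \<in> R"
    by (induction rule: subring_gen.induct) (use assms in auto)
qed

lemma sg_sub: "S \<subseteq> subring_gen S' \<Longrightarrow> subring_gen S \<subseteq> subring_gen S'"
  by (rule sg_closed) (auto intro: subring_gen.intros)

lemma sg_mono: "S \<subseteq> S' \<Longrightarrow> subring_gen S \<subseteq> subring_gen S'"
  by (rule sg_sub) (auto intro: subring_gen.gen)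

lemma sg_hom:
  assumes "\<And>x. x \<in> S \<Longrightarrow> \<phi> x \<in> subring_gen S'" "\<phi> 1 = 1"
    "\<And>x y. \<phi> (x - y) = \<phi> x - \<phi> y" "\<And>x y. \<phi> (x * y) = \<phi> x * \<phi> y"
  shows "x \<in> subring_gen S \<Longrightarrow> \<phi> x \<in> subring_gen S'"
  by (induction rule: subring_gen.induct) (auto simp: assms intro: subring_gen.intros)

lemma conj_sg:
  fixes Y :: "'f::division_ring"
  assumes "Y \<noteq> 0" "\<And>x. x \<in> S \<Longrightarrow> Y * x * inverse Y \<in> subring_gen S"
  shows "x \<in> subring_gen S \<Longrightarrow> Y * x * inverse Y \<in> subring_gen S"
proof (rule sg_hom[where \<phi>="\<lambda>x. Y * x * inverse Y"])
  show "Y * 1 * inverse Y = 1" using assms by simp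
  show "Y * (x - y) * inverse Y = Y * x * inverse Y - Y * y * inverse Y" for x y
    by (simp add: algebra_simps)
  show "Y * (x * y) * inverse Y = Y * x * inverse Y * (Y * y * inverse Y)" for x y
  proof -
    have e: "inverse Y * (Y * z) = z" for z using assms(1) by (simp add: mult.assoc[symmetric])
    show ?thesis by (simp add: mult.assoc e)
  qed
qed (use assms in auto)

definition NF :: "'f::division_ring set \<Rightarrow> 'f \<Rightarrow> 'f set" where
  "NF R Y = {\<Sum>b\<in>F. c b * Y powi b | F c. finite F \<and> (\<forall>b\<in>F. c b \<in> R)}"

lemma conj_pow:
  fixes Y :: "'f::division_ring"
  assumes "Y \<noteq> 0" "\<And>x. x \<in> R \<Longrightarrow> Y * x * inverse Y \<in> R"
  shows "x \<in> R \<Longrightarrow> Y ^ k * x * inverse (Y ^ k) \<in> R"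
proof (induction k arbitrary: x)
  case 0 thus ?case by simp
next
  case (Suc k)
  have "Y ^ Suc k * x * inverse (Y ^ Suc k) = Y * (Y ^ k * x * inverse (Y ^ k)) * inverse Y"
    using assms(1) by (simp add: nonzero_inverse_mult_distrib mult.assoc power_commutes)
  thus ?case using Suc assms by simp
qed

lemma conj_powi:
  fixes Y :: "'f::division_ring"
  assumes "Y \<noteq> 0" "\<And>x. x \<in> R \<Longrightarrow> Y * x * inverse Y \<in> R"
    "\<And>x. x \<in> R \<Longrightarrow> inverse Y * x * Y \<in> R"
  shows "x \<in> R \<Longrightarrow> Y powi b * x * inverse (Y powi b) \<in> R"
proof -
  assume x: "x \<in> R"
  show ?thesis
  proof (cases "b \<ge> 0")
    case True thus ?thesis using conj_pow[OF assms(1,2) x] by (simp add: power_int_def)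
  next
    case False
    have "inverse Y ^ k * x * inverse (inverse Y ^ k) \<in> R" for k
      by (rule conj_pow[OF _ _ x]) (use assms in auto)
    thus ?thesis using False by (simp add: power_int_def)
  qed
qed

locale nfloc =
  fixes R :: "'f::division_ring set" and Y :: 'f
  assumes Y0: "Y \<noteq> 0"
    and one: "1 \<in> R" and diff: "\<And>x y. x \<in> R \<Longrightarrow> y \<in> R \<Longrightarrow> x - y \<in> R"
    and mult: "\<And>x y. x \<in> R \<Longrightarrow> y \<in> R \<Longrightarrow> x * y \<in> R"
    and cj1: "\<And>x. x \<in> R \<Longrightarrow> Y * x * inverse Y \<in> R"
    and cj2: "\<And>x. x \<in> R \<Longrightarrow> inverse Y * x * Y \<in> R"
begin

lemma NFI: "finite F \<Longrightarrow> \<forall>b\<in>F. c b \<in> R \<Longrightarrow> x = (\<Sum>b\<in>F. c b * Y powi b) \<Longrightarrow> x \<in> NF R Y"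
  unfolding NF_def by blast

lemma NF_term: "c \<in> R \<Longrightarrow> c * Y powi b \<in> NF R Y"
  unfolding NF_def by (rule CollectI, rule exI[of _ "{b}"], rule exI[of _ "\<lambda>_. c"]) auto

lemma NF_zero: "0 \<in> NF R Y"
  unfolding NF_def by (rule CollectI, rule exI[of _ "{}"]) auto

lemma zeroR: "0 \<in> R" using diff[OF one one] by simp

lemma NF_add: assumes "x \<in> NF R Y" "y \<in> NF R Y" shows "x + y \<in> NF R Y"
proof -
  obtain F1 c1 where 1: "x = (\<Sum>b\<in>F1. c1 b * Y powi b)" "finite F1" "\<forall>b\<in>F1. c1 b \<in> R"
    using assms(1) unfolding NF_def by blast
  obtain F2 c2 where 2: "y = (\<Sum>b\<in>F2. c2 b * Y powi b)" "finite F2" "\<forall>b\<in>F2. c2 b \<in> R"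
    using assms(2) unfolding NF_def by blast
  define c where "c = (\<lambda>b. (if b \<in> F1 then c1 b else 0) + (if b \<in> F2 then c2 b else 0))"
  have addR: "a \<in> R \<Longrightarrow> b \<in> R \<Longrightarrow> a + b \<in> R" for a b
    using diff[OF _ diff[OF zeroR]] by fastforce
  have cR: "\<forall>b\<in>F1 \<union> F2. c b \<in> R" using 1 2 zeroR addR by (auto simp: c_def)
  have "(\<Sum>b\<in>F1 \<union> F2. c b * Y powi b) = (\<Sum>b\<in>F1 \<union> F2. (if b \<in> F1 then c1 b * Y powi b else 0))
      + (\<Sum>b\<in>F1 \<union> F2. (if b \<in> F2 then c2 b * Y powi b else 0))"
    by (unfold sum.distrib[symmetric], intro sum.cong refl) (auto simp: c_def distrib_right)
  also have "\<dots> = x + y" using 1 2 by (simp add: sum_if_restrict)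
  finally show ?thesis using 1 2 cR by (intro NFI[of "F1 \<union> F2" c]) auto
qed

lemma NF_sum: "finite F \<Longrightarrow> (\<And>a. a \<in> F \<Longrightarrow> g a \<in> NF R Y) \<Longrightarrow> (\<Sum>a\<in>F. g a) \<in> NF R Y"
  by (induction F rule: finite_induct) (auto intro: NF_zero NF_add)

lemma NF_neg: assumes "x \<in> NF R Y" shows "- x \<in> NF R Y"
proof -
  obtain F1 c1 where 1: "x = (\<Sum>b\<in>F1. c1 b * Y powi b)" "finite F1" "\<forall>b\<in>F1. c1 b \<in> R"
    using assms(1) unfolding NF_def by blast
  have e: "- x = (\<Sum>b\<in>F1. (\<lambda>b. 0 - c1 b) b * Y powi b)" by (simp add: 1 sum_negf)
  have cm: "\<forall>b\<in>F1. (\<lambda>b. 0 - c1 b) b \<in> R" using 1(3) diff zeroR by blast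
  show ?thesis by (rule NFI[OF 1(2) cm e])
qed

lemma NF_mult_term: assumes "c \<in> R" "c' \<in> R" shows "(c * Y powi b) * (c' * Y powi b') \<in> NF R Y"
proof -
  have YB: "Y powi b \<noteq> 0" using Y0 by simp
  have "(c * Y powi b) * (c' * Y powi b') = (c * (Y powi b * c' * inverse (Y powi b))) * (Y powi b * Y powi b')"
  proof -
    have e: "inverse (Y powi b) * (Y powi b * z) = z" for z using YB by (simp add: mult.assoc[symmetric])
    show ?thesis by (simp add: mult.assoc e)
  qed
  also have "\<dots> = (c * (Y powi b * c' * inverse (Y powi b))) * Y powi (b + b')"
    using Y0 by (simp add: power_int_add)
  finally show ?thesis
    using NF_term mult[OF assms(1) conj_powi[OF Y0 cj1 cj2 assms(2)]] by simp
qed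

lemma NF_mult: assumes "x \<in> NF R Y" "y \<in> NF R Y" shows "x * y \<in> NF R Y"
proof -
  obtain F1 c1 where 1: "x = (\<Sum>b\<in>F1. c1 b * Y powi b)" "finite F1" "\<forall>b\<in>F1. c1 b \<in> R"
    using assms(1) unfolding NF_def by blast
  obtain F2 c2 where 2: "y = (\<Sum>b\<in>F2. c2 b * Y powi b)" "finite F2" "\<forall>b\<in>F2. c2 b \<in> R"
    using assms(2) unfolding NF_def by blast
  have "x * y = (\<Sum>b\<in>F1. (c1 b * Y powi b) * y)"
    by (simp add: 1(1) sum_distrib_right)
  also have "\<dots> = (\<Sum>b\<in>F1. \<Sum>b'\<in>F2. (c1 b * Y powi b) * (c2 b' * Y powi b'))"
    by (simp add: 2(1) sum_distrib_left)
  also have "\<dots> \<in> NF R Y" using 1 2 by (intro NF_sum NF_mult_term) auto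
  finally show ?thesis .
qed

lemma sg_NF: "S \<subseteq> R \<Longrightarrow> subring_gen (S \<union> {Y, inverse Y}) \<subseteq> NF R Y"
proof (rule sg_closed)
  assume "S \<subseteq> R"
  hence "c \<in> NF R Y" if "c \<in> S" for c using NF_term[of c 0] that by auto
  moreover have "Y \<in> NF R Y" using NF_term[OF one, of 1] by simp
  moreover have "inverse Y \<in> NF R Y" using NF_term[OF one, of "-1"] by simp
  ultimately show "S \<union> {Y, inverse Y} \<subseteq> NF R Y" by auto
  show "1 \<in> NF R Y" using NF_term[OF one, of 0] by simp
  show "x - y \<in> NF R Y" if "x \<in> NF R Y" "y \<in> NF R Y" for x y
    using NF_add[OF that(1) NF_neg[OF that(2)]] by simp
  show "x * y \<in> NF R Y" if "x \<in> NF R Y" "y \<in> NF R Y" for x y using NF_mult that .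
qed

end




context qseed begin

definition Gi :: "nat \<Rightarrow> 'f set" where
  "Gi i = ZP_gens m n t X \<union> (\<Union>k\<in>{1..n} - {i}. {X (\<ee> k), inverse (X (\<ee> k))})"

definition wv :: "nat \<Rightarrow> nat \<Rightarrow> nat \<Rightarrow> int" where
  "wv i r = (\<lambda>j. int r * posp (beta m B d i) j
               + int (d i - r) * posp (\<lambda>l. - beta m B d i l) j - \<ee> i j)"

lemma Xp_eq: "mutated_var m X h d B i = (\<Sum>r\<in>{0..d i}. h i r * X (wv i r))"
  unfolding mutated_var_def wv_def ..

lemma tpow_Tp: "t powi k \<in> Tp j (\<lambda>z. z = 0)"
  using Tp_mono[OF zero_lattice, where P="\<lambda>z. z = 0" and j=j and k=k] by (simp add: X0)

lemma laurent_Tp: assumes "y \<in> laurent_coeffs t" shows "y \<in> Tp j (\<lambda>z. z = 0)"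
proof -
  obtain J a where y: "y = (\<Sum>k\<in>J. of_int (a k) * t powi k)" "finite J"
    using assms unfolding laurent_coeffs_def by blast
  show ?thesis unfolding y(1) by (intro Tp_sum Tp_ofint tpow_Tp y(2))
qed

lemma laurent_central: assumes "y \<in> laurent_coeffs t" shows "y * x = x * y"
proof -
  obtain J a where y: "y = (\<Sum>k\<in>J. of_int (a k) * t powi k)"
    using assms unfolding laurent_coeffs_def by blast
  have "of_int (a k) * t powi k * x = x * (of_int (a k) * t powi k)" for k
  proof -
    have "of_int (a k) * t powi k * x = of_int (a k) * (x * t powi k)"
      by (simp add: mult.assoc tpow_central)
    also have "\<dots> = (of_int (a k) * x) * t powi k" by (simp add: mult.assoc)
    also have "of_int (a k) * x = x * of_int (a k)" by (rule mult_of_int_commute)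
    finally show ?thesis by (simp add: mult.assoc)
  qed
  thus ?thesis by (simp add: y sum_distrib_left sum_distrib_right)
qed

lemma tpow_sg: assumes "t \<in> S" "inverse t \<in> S" shows "t powi k \<in> subring_gen S"
  using assms by (simp add: power_int_def sg_pow subring_gen.gen)

lemma laurent_sg: assumes "t \<in> S" "inverse t \<in> S" "y \<in> laurent_coeffs t" shows "y \<in> subring_gen S"
proof -
  obtain J a where y: "y = (\<Sum>k\<in>J. of_int (a k) * t powi k)" "finite J"
    using assms unfolding laurent_coeffs_def by blast
  show ?thesis unfolding y(1)
    by (intro sg_sum y(2) subring_gen.mult sg_of_int tpow_sg assms(1,2))
qed

lemma MON:
  assumes K: "K \<subseteq> {1..m}" and S: "t \<in> S" "inverse t \<in> S" "\<And>k. k \<in> K \<Longrightarrow> X (\<ee> k) \<in> S"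
    "\<And>k. k \<in> K \<Longrightarrow> inverse (X (\<ee> k)) \<in> S"
  shows "c \<in> lattice m \<Longrightarrow> (\<And>k. c k \<noteq> 0 \<Longrightarrow> k \<in> K) \<Longrightarrow> X c \<in> subring_gen S"
proof (induction c rule: measure_induct_rule[where f="\<lambda>c. \<Sum>k\<in>{1..m}. nat \<bar>c k\<bar>"])
  case (less c)
  show ?case
  proof (cases "\<exists>k. c k \<noteq> 0")
    case False
    hence "c = (\<lambda>_. 0)" by auto
    thus ?thesis using X0 subring_gen.one by simp
  next
    case True
    then obtain k where k: "c k \<noteq> 0" by blast
    have kK: "k \<in> K" using less.prems(2) k by blast
    hence km: "k \<in> {1..m}" using K by blast
    define s :: int where "s = (if c k > 0 then 1 else -1)"
    define c' where "c' = (\<lambda>j. c j - s * \<ee> k j)"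
    define u where "u = (\<lambda>j. s * \<ee> k j)"
    have ul: "u \<in> lattice m" using km by (auto simp: lattice_def u_def unitvec_def)
    have c'l: "c' \<in> lattice m" using less.prems(1) km
      unfolding lattice_def c'_def unitvec_def by (auto split: if_splits)
    have c'K: "c' j \<noteq> 0 \<Longrightarrow> j \<in> K" for j using less.prems(2)[of j] kK
      by (auto simp: c'_def unitvec_def split: if_splits)
    have lt: "(\<Sum>j\<in>{1..m}. nat \<bar>c' j\<bar>) < (\<Sum>j\<in>{1..m}. nat \<bar>c j\<bar>)"
    proof (rule sum_strict_mono_ex1)
      show "\<forall>j\<in>{1..m}. nat \<bar>c' j\<bar> \<le> nat \<bar>c j\<bar>" using k by (auto simp: c'_def unitvec_def s_def)
      show "\<exists>j\<in>{1..m}. nat \<bar>c' j\<bar> < nat \<bar>c j\<bar>" using k km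
        by (intro bexI[of _ k]) (auto simp: c'_def unitvec_def s_def)
    qed simp
    have IH: "X c' \<in> subring_gen S" using less.IH[OF lt c'l] c'K by blast
    have us: "X u \<in> subring_gen S"
    proof (cases "c k > 0")
      case True hence "u = \<ee> k" by (auto simp: u_def s_def)
      thus ?thesis using S(3)[OF kK] subring_gen.gen by simp
    next
      case False hence "u = (\<lambda>j. - \<ee> k j)" by (auto simp: u_def s_def)
      thus ?thesis using S(4)[OF kK] subring_gen.gen X_neg_unit[OF km] by simp
    qed
    have cc: "(\<lambda>j. c' j + u j) = c" by (auto simp: c'_def u_def)
    have "X c' * X u = t powi (bilin m L c' u) * X c" using Xmult[OF c'l ul] cc by simp
    hence "t powi (- bilin m L c' u) * (X c' * X u) = X c"
      by (simp add: mult.assoc[symmetric] tpow_add)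
    moreover have "t powi (- bilin m L c' u) * (X c' * X u) \<in> subring_gen S"
      by (intro subring_gen.mult tpow_sg S(1,2) IH us)
    ultimately show ?thesis by simp
  qed
qed

lemma conj_gen: assumes Y0: "Y \<noteq> 0" and e: "X c * Y = t powi j * Y * X c"
  shows "Y * X c * inverse Y = t powi (-j) * X c" and "inverse Y * X c * Y = t powi j * X c"
proof -
  have tc: "t powi j * Y = Y * t powi j" by (rule tpow_central)
  have "inverse Y * X c * Y = inverse Y * (X c * Y)" by (simp add: mult.assoc)
  also have "\<dots> = inverse Y * (Y * t powi j * X c)" using e tc by simp
  also have "\<dots> = (inverse Y * Y) * (t powi j * X c)" by (simp add: mult.assoc)
  also have "\<dots> = t powi j * X c" using Y0 by simp
  finally show "inverse Y * X c * Y = t powi j * X c" .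
  have f: "t powi (-j) * (X c * Y) = Y * X c"
  proof -
    have "t powi (-j) * (X c * Y) = (t powi (-j) * t powi j) * Y * X c" using e by (simp add: mult.assoc)
    also have "\<dots> = Y * X c" by (simp add: tpow_add)
    finally show ?thesis .
  qed
  have "Y * X c * inverse Y = (t powi (-j) * (X c * Y)) * inverse Y" using f by simp
  also have "\<dots> = t powi (-j) * X c * (Y * inverse Y)" by (simp add: mult.assoc)
  also have "\<dots> = t powi (-j) * X c" using Y0 by simp
  finally show "Y * X c * inverse Y = t powi (-j) * X c" .
qed

lemma central_conj: fixes Y g :: 'f assumes Y0: "Y \<noteq> 0" and g: "\<And>x. g * x = x * g"
  shows "Y * g * inverse Y = g" and "inverse Y * g * Y = g"
proof -
  have "Y * g * inverse Y = g * Y * inverse Y" using g[of Y] by simp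
  also have "\<dots> = g * (Y * inverse Y)" by (simp add: mult.assoc)
  also have "\<dots> = g" using Y0 by simp
  finally show "Y * g * inverse Y = g" .
  have "inverse Y * g * Y = inverse Y * (Y * g)" using g[of Y] by (simp add: mult.assoc)
  also have "\<dots> = (inverse Y * Y) * g" by (simp add: mult.assoc)
  also have "\<dots> = g" using Y0 by simp
  finally show "inverse Y * g * Y = g" .
qed

context
  fixes i assumes i: "i \<in> {1..n}"
begin

lemma im: "i \<in> {1..m}" using i nm by auto

abbreviation "\<beta> \<equiv> beta m B d i"

lemma beta_ii: "\<beta> i = 0"
  using im B_diag[OF i] by (simp add: beta_def)

lemma beta_mul: "l \<in> {1..m} \<Longrightarrow> int (d i) * \<beta> l = B l i"
  using ddvd[OF i] by (simp add: beta_def)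

lemma beta_out: "l \<notin> {1..m} \<Longrightarrow> \<beta> l = 0"
  by (auto simp: beta_def)

lemma wv_lat: "wv i r \<in> lattice m"
  unfolding lattice_def
proof (intro CollectI allI impI)
  fix k assume "wv i r k \<noteq> 0"
  thus "k \<in> {1..m}" using im by (cases "k \<in> {1..m}") (auto simp: wv_def posp_def unitvec_def beta_out)
qed

lemma wv_i: "wv i r i = -1"
  by (simp add: wv_def posp_def beta_ii unitvec_def)

lemma wv_lin: assumes "r \<le> d i" shows "wv i r l = wv i 0 l + int r * \<beta> l"
proof -
  have e: "int (d i - r) = int (d i) - int r" using assms by simp
  show ?thesis unfolding wv_def posp_def e
    by (cases "\<beta> l \<ge> 0") (auto simp: max_def algebra_simps)
qed

lemma Lsum: assumes k: "k \<in> {1..m}" "k \<noteq> i" shows "(\<Sum>l\<in>{1..m}. L k l * \<beta> l) = 0"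
proof -
  obtain D where DE: "\<forall>k\<in>{1..m}. \<forall>l\<in>{1..n}.
            (\<Sum>j\<in>{1..m}. L k j * B j l) = (if k = l then - D l else (0::int))" using compat by blast
  have "int (d i) * (\<Sum>l\<in>{1..m}. L k l * \<beta> l) = (\<Sum>l\<in>{1..m}. L k l * B l i)"
    by (simp add: sum_distrib_left beta_mul[symmetric] algebra_simps)
  also have "\<dots> = 0" using DE k i by simp
  finally show ?thesis using dpos[OF i] by simp
qed

lemma bilin_w: assumes c: "c \<in> lattice m" "c i = 0" and r: "r \<le> d i"
  shows "bilin m L c (wv i r) = bilin m L c (wv i 0)"
proof -
  have "bilin m L c (wv i r) = (\<Sum>k\<in>{1..m}. \<Sum>l\<in>{1..m}. c k * L k l * wv i 0 l + int r * (c k * (L k l * \<beta> l)))"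
    unfolding bilin_def by (intro sum.cong refl) (simp add: wv_lin[OF r] algebra_simps)
  also have "\<dots> = bilin m L c (wv i 0) + int r * (\<Sum>k\<in>{1..m}. c k * (\<Sum>l\<in>{1..m}. L k l * \<beta> l))"
    by (simp add: bilin_def sum.distrib sum_distrib_left)
  also have "(\<Sum>k\<in>{1..m}. c k * (\<Sum>l\<in>{1..m}. L k l * \<beta> l)) = 0"
  proof (intro sum.neutral ballI)
    fix k assume "k \<in> {1..m}" thus "c k * (\<Sum>l\<in>{1..m}. L k l * \<beta> l) = 0"
      using c(2) Lsum[of k] by (cases "k = i") auto
  qed
  finally show ?thesis by simp
qed

lemma Xp_Tp: "mutated_var m X h d B i \<in> Tp i (\<lambda>z. z = -1)"
  unfolding Xp_eq
proof (intro Tp_sum)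
  fix r assume "r \<in> {0..d i}"
  hence "h i r \<in> Tp i (\<lambda>z. z = 0)" using laurent_Tp hprops(1)[OF i] by auto
  moreover have "X (wv i r) \<in> Tp i (\<lambda>z. z = -1)"
    using Tp_mono[OF wv_lat[of r], where P="\<lambda>z. z = -1" and j=i and k=0] wv_i by simp
  ultimately show "h i r * X (wv i r) \<in> Tp i (\<lambda>z. z = -1)" by (rule Tp_mult) simp
qed simp

lemma pow_Tp: "y \<in> Tp j (\<lambda>z. z = a) \<Longrightarrow> y ^ k \<in> Tp j (\<lambda>z. z = int k * a)"
proof (induction k)
  case 0 thus ?case using tpow_Tp[of 0 j] by simp
next
  case (Suc k)
  have "y * y ^ k \<in> Tp j (\<lambda>z. z = int (Suc k) * a)"
    by (rule Tp_mult[OF Suc.prems Suc.IH[OF Suc.prems]]) (simp add: algebra_simps)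
  thus ?case by simp
qed

lemma Xp_ne0: "mutated_var m X h d B i \<noteq> 0"
proof -
  obtain D where Dp: "\<forall>l\<in>{1..n}. D l > (0::int)" and DE: "\<forall>k\<in>{1..m}. \<forall>l\<in>{1..n}.
            (\<Sum>j\<in>{1..m}. L k j * B j l) = (if k = l then - D l else 0)" using compat by blast
  have "D i > 0" using Dp i by blast
  moreover have "(\<Sum>j\<in>{1..m}. L i j * B j i) = - D i" using DE i im by auto
  ultimately have "(\<Sum>j\<in>{1..m}. L i j * B j i) \<noteq> 0" by simp
  hence "\<exists>l\<in>{1..m}. B l i \<noteq> 0"
  proof (rule contrapos_pp)
    assume "\<not> (\<exists>l\<in>{1..m}. B l i \<noteq> 0)"
    thus "\<not> (\<Sum>j\<in>{1..m}. L i j * B j i) \<noteq> 0" by (simp add: sum.neutral)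
  qed
  then obtain l where l: "l \<in> {1..m}" "B l i \<noteq> 0" by blast
  have bl: "\<beta> l \<noteq> 0" using beta_mul[OF l(1)] l(2) by auto
  have li: "l \<noteq> i" using l B_diag[OF i] by auto
  have w0: "wv i 0 l = int (d i) * max (- \<beta> l) 0"
    using li by (simp add: wv_def posp_def unitvec_def)
  obtain r0 where r0: "r0 \<in> {0..d i}" "h i r0 = 1" "wv i r0 l = 0"
    "\<And>r. r \<in> {0..d i} - {r0} \<Longrightarrow> wv i r l > 0"
  proof (cases "\<beta> l > 0")
    case True
    show ?thesis
    proof (rule that[of 0])
      fix r assume "r \<in> {0..d i} - {0}"
      thus "wv i r l > 0" using wv_lin[of r l] w0 True by auto
    qed (use hprops(2)[OF i] w0 True in auto)
  next
    case False
    hence F: "\<beta> l < 0" using bl by simp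
    show ?thesis
    proof (rule that[of "d i"])
      fix r assume r: "r \<in> {0..d i} - {d i}"
      have "wv i r l = (int (d i) - int r) * (- \<beta> l)" using wv_lin[of r l] w0 F r by (auto simp: algebra_simps)
      moreover have p: "int (d i) - int r > 0" using r by auto
      ultimately show "wv i r l > 0" using mult_pos_pos[OF p, of "- \<beta> l"] F by simp
    next
      show "wv i (d i) l = 0" using wv_lin[of "d i" l] w0 F by (simp add: algebra_simps)
    qed (use hprops(3)[OF i] in auto)
  qed
  define rest where "rest = (\<Sum>r\<in>{0..d i} - {r0}. h i r * X (wv i r))"
  have Xp: "mutated_var m X h d B i = X (wv i r0) + rest"
    unfolding Xp_eq rest_def using r0 by (simp add: sum.remove)
  have rest: "rest \<in> Tp l (\<lambda>z. z > 0)" unfolding rest_def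
  proof (intro Tp_sum)
    fix r assume r: "r \<in> {0..d i} - {r0}"
    hence "h i r \<in> Tp l (\<lambda>z. z = 0)" using laurent_Tp hprops(1)[OF i] by auto
    moreover have "X (wv i r) \<in> Tp l (\<lambda>z. z > 0)"
      using Tp_mono[OF wv_lat[of r], where P="\<lambda>z. z > 0" and j=l and k=0] r0(4)[OF r] by simp
    ultimately show "h i r * X (wv i r) \<in> Tp l (\<lambda>z. z > 0)" by (rule Tp_mult) simp
  qed simp
  show ?thesis
  proof
    assume "mutated_var m X h d B i = 0"
    hence "X (wv i r0) = - rest" using Xp by (simp add: eq_neg_iff_add_eq_0)
    hence a: "X (wv i r0) \<in> Tp l (\<lambda>z. z > 0)" using Tp_neg[OF rest] by simp
    have b: "X (wv i r0) \<in> Tp l (\<lambda>z. z = 0)"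
      using Tp_mono[OF wv_lat[of r0], where P="\<lambda>z. z = 0" and j=l and k=0] r0(3) by simp
    have "X (wv i r0) = 0" by (rule Tp_disj[OF b a]) simp
    thus False using X_ne0[OF wv_lat] by simp
  qed
qed


abbreviation "Xq \<equiv> mutated_var m X h d B i"

lemma t_Gi: "t \<in> Gi i" "inverse t \<in> Gi i" by (auto simp: Gi_def ZP_gens_def)

lemma unit_Gi: "k \<in> {1..m} \<Longrightarrow> k \<noteq> i \<Longrightarrow> X (\<ee> k) \<in> Gi i \<and> inverse (X (\<ee> k)) \<in> Gi i"
  by (cases "k \<le> n") (auto simp: Gi_def ZP_gens_def)

lemma Gi_cases: assumes "g \<in> Gi i"
  shows "g = t \<or> g = inverse t \<or> (\<exists>c. c \<in> lattice m \<and> c i = 0 \<and> g = X c)"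
proof -
  have "g = t \<or> g = inverse t \<or> (\<exists>k. k \<in> {n+1..m} \<union> ({1..n} - {i}) \<and> (g = X (\<ee> k) \<or> g = inverse (X (\<ee> k))))"
    using assms unfolding Gi_def ZP_gens_def by blast
  moreover have "k \<in> {n+1..m} \<union> ({1..n} - {i}) \<Longrightarrow> k \<in> {1..m} \<and> k \<noteq> i" for k using i nm by auto
  ultimately consider "g = t" | "g = inverse t" | k where "k \<in> {1..m}" "k \<noteq> i" "g = X (\<ee> k) \<or> g = inverse (X (\<ee> k))"
    by blast
  thus ?thesis
  proof cases
    case (3 k)
    show ?thesis using 3(3)
    proof
      assume "g = X (\<ee> k)" thus ?thesis using unit_lattice[OF 3(1)] 3(2) by (auto simp: unitvec_def)
    next
      assume "g = inverse (X (\<ee> k))"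
      thus ?thesis using X_neg_unit[OF 3(1)] lattice_uminus[OF unit_lattice[OF 3(1)]] 3(2)
        by (intro disjI2 exI[of _ "\<lambda>j. - \<ee> k j"]) (auto simp: unitvec_def)
    qed
  qed auto
qed

lemma conjR:
  assumes Y0: "Y \<noteq> 0" and qcY: "\<And>c. c \<in> lattice m \<Longrightarrow> c i = 0 \<Longrightarrow> \<exists>j. X c * Y = t powi j * Y * X c"
  shows "x \<in> subring_gen (Gi i) \<Longrightarrow> Y * x * inverse Y \<in> subring_gen (Gi i)"
    and "x \<in> subring_gen (Gi i) \<Longrightarrow> inverse Y * x * Y \<in> subring_gen (Gi i)"
proof -
  have tp: "t powi k \<in> subring_gen (Gi i)" for k using tpow_sg t_Gi by blast
  have gen: "Y * g * inverse Y \<in> subring_gen (Gi i) \<and> inverse Y * g * Y \<in> subring_gen (Gi i)"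
    if g: "g \<in> Gi i" for g
  proof -
    have gs: "g \<in> subring_gen (Gi i)" using g by (rule subring_gen.gen)
    consider "g = t \<or> g = inverse t" | c where "c \<in> lattice m" "c i = 0" "g = X c" using Gi_cases[OF g] by blast
    thus ?thesis
    proof cases
      case 1
      have "g * x = x * g" for x using 1 tpow_central[of 1 x] tpow_central[of "-1" x] by (auto simp: power_int_minus)
      thus ?thesis using central_conj[OF Y0, of g] gs by auto
    next
      case 2
      then obtain j where "X c * Y = t powi j * Y * X c" using qcY by blast
      from conj_gen[OF Y0 this] show ?thesis using 2 gs tp by (auto intro: subring_gen.mult)
    qed
  qed
  show "x \<in> subring_gen (Gi i) \<Longrightarrow> Y * x * inverse Y \<in> subring_gen (Gi i)"
    by (rule conj_sg[OF Y0]) (use gen in blast)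
  show "x \<in> subring_gen (Gi i) \<Longrightarrow> inverse Y * x * Y \<in> subring_gen (Gi i)"
    using conj_sg[of "inverse Y" "Gi i" x] Y0 gen by simp
qed

lemma qc_Xp: assumes c: "c \<in> lattice m" "c i = 0"
  shows "X c * Xq = t powi (2 * bilin m L c (wv i 0)) * Xq * X c"
proof -
  let ?b = "bilin m L c (wv i 0)"
  have tm: "X c * (h i r * X (wv i r)) = t powi (2 * ?b) * (h i r * X (wv i r)) * X c"
    if r: "r \<in> {0..d i}" for r
  proof -
    have hl: "h i r \<in> laurent_coeffs t" using hprops(1)[OF i] r by simp
    have hc: "X c * h i r = h i r * X c" by (rule laurent_central[OF hl, symmetric])
    have bw: "bilin m L c (wv i r) = ?b" using r by (intro bilin_w[OF c]) simp
    have xc: "X c * X (wv i r) = t powi (2 * ?b) * X (wv i r) * X c"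
      using Xcomm[OF c(1) wv_lat[of r]] unfolding bw .
    have tc: "h i r * t powi (2 * ?b) = t powi (2 * ?b) * h i r" by (rule tpow_central[symmetric])
    have "X c * (h i r * X (wv i r)) = h i r * (X c * X (wv i r))" by (simp add: mult.assoc[symmetric] hc)
    also have "\<dots> = (h i r * t powi (2 * ?b)) * (X (wv i r) * X c)" by (simp add: xc mult.assoc)
    also have "\<dots> = t powi (2 * ?b) * (h i r * X (wv i r)) * X c" by (simp add: tc mult.assoc)
    finally show ?thesis .
  qed
  have "X c * Xq = (\<Sum>r\<in>{0..d i}. X c * (h i r * X (wv i r)))" by (simp add: Xp_eq sum_distrib_left)
  also have "\<dots> = (\<Sum>r\<in>{0..d i}. t powi (2 * ?b) * (h i r * X (wv i r)) * X c)" by (intro sum.cong refl tm)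
  also have "\<dots> = t powi (2 * ?b) * Xq * X c" by (simp add: Xp_eq sum_distrib_left sum_distrib_right)
  finally show ?thesis .
qed

lemma Xp_L: "Xq \<in> L_ring m n t X"
  unfolding Xp_eq L_ring_def
proof (intro sg_sum subring_gen.mult)
  fix r assume r: "r \<in> {0..d i}"
  show "h i r \<in> subring_gen (ZP_gens m n t X \<union> (\<Union>k\<in>{1..n}. {X (\<ee> k), inverse (X (\<ee> k))}))"
    using r hprops(1)[OF i] by (intro laurent_sg) (auto simp: ZP_gens_def)
  show "X (wv i r) \<in> subring_gen (ZP_gens m n t X \<union> (\<Union>k\<in>{1..n}. {X (\<ee> k), inverse (X (\<ee> k))}))"
  proof (rule MON[of "{1..m}"])
    fix k assume k: "k \<in> {1..m}"
    show "X (\<ee> k) \<in> ZP_gens m n t X \<union> (\<Union>k\<in>{1..n}. {X (\<ee> k), inverse (X (\<ee> k))})"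
      using k by (cases "k \<le> n") (auto simp: ZP_gens_def)
    show "inverse (X (\<ee> k)) \<in> ZP_gens m n t X \<union> (\<Union>k\<in>{1..n}. {X (\<ee> k), inverse (X (\<ee> k))})"
      using k by (cases "k \<le> n") (auto simp: ZP_gens_def)
  qed (use wv_lat in \<open>auto simp: ZP_gens_def lattice_def\<close>)
qed simp


lemma Xi_M: "X (\<ee> i) \<in> subring_gen (Gi i \<union> {Xq, inverse Xq})"
proof -
  let ?S = "Gi i \<union> {Xq, inverse Xq}"
  have tS: "t \<in> ?S" "inverse t \<in> ?S" using t_Gi by auto
  have tm: "X (\<ee> i) * (h i r * X (wv i r)) \<in> subring_gen ?S" if r: "r \<in> {0..d i}" for r
  proof -
    have hl: "h i r \<in> laurent_coeffs t" using hprops(1)[OF i] r by simp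
    have hc: "X (\<ee> i) * h i r = h i r * X (\<ee> i)" by (rule laurent_central[OF hl, symmetric])
    define u where "u = (\<lambda>k. \<ee> i k + wv i r k)"
    have ul: "u \<in> lattice m" unfolding u_def by (rule lattice_add[OF unit_lattice[OF im] wv_lat])
    have "X (\<ee> i) * (h i r * X (wv i r)) = h i r * (X (\<ee> i) * X (wv i r))"
      by (simp add: mult.assoc[symmetric] hc)
    also have "\<dots> = h i r * (t powi (bilin m L (\<ee> i) (wv i r)) * X u)"
      using Xmult[OF unit_lattice[OF im] wv_lat[of r]] by (simp add: u_def)
    finally have eq: "X (\<ee> i) * (h i r * X (wv i r)) = h i r * (t powi (bilin m L (\<ee> i) (wv i r)) * X u)" .
    have "X u \<in> subring_gen ?S"
    proof (rule MON[of "{1..m} - {i}"])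
      fix k assume k: "k \<in> {1..m} - {i}"
      show "X (\<ee> k) \<in> ?S" using unit_Gi k by auto
      show "inverse (X (\<ee> k)) \<in> ?S" using unit_Gi k by auto
    next
      show "u \<in> lattice m" by (rule ul)
    next
      fix k assume uk: "u k \<noteq> 0"
      have "k \<in> {1..m}" using ul uk unfolding lattice_def by blast
      moreover have "k \<noteq> i" using uk wv_i[of r] by (auto simp: u_def unitvec_def)
      ultimately show "k \<in> {1..m} - {i}" by blast
    qed (use tS in auto)
    thus ?thesis unfolding eq
      by (intro subring_gen.mult laurent_sg[OF tS hl] tpow_sg[OF tS])
  qed
  have "X (\<ee> i) * Xq = (\<Sum>r\<in>{0..d i}. X (\<ee> i) * (h i r * X (wv i r)))"
    by (simp only: Xp_eq sum_distrib_left)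
  hence P: "X (\<ee> i) * Xq \<in> subring_gen ?S" using tm by (auto intro: sg_sum)
  have iq: "inverse Xq \<in> subring_gen ?S" by (rule subring_gen.gen) simp
  have "X (\<ee> i) = (X (\<ee> i) * Xq) * inverse Xq" using Xp_ne0 by (simp add: mult.assoc)
  thus ?thesis using subring_gen.mult[OF P iq] by simp
qed

lemma Lr_eq: "L_ring m n t X = subring_gen (Gi i \<union> {X (\<ee> i), inverse (X (\<ee> i))})"
  unfolding L_ring_def Gi_def using i by (intro arg_cong[where f=subring_gen]) auto

lemma Lm_eq: "L_mut_ring m n t X h d B i = subring_gen (Gi i \<union> {Xq, inverse Xq})"
  by (simp add: L_mut_ring_def Gi_def)

abbreviation "Ai \<equiv> subring_gen (Gi i \<union> {X (\<ee> i), Xq})"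

lemma A_sub_L: "Ai \<subseteq> L_ring m n t X"
  unfolding Lr_eq
proof (rule sg_sub)
  show "Gi i \<union> {X (\<ee> i), Xq} \<subseteq> subring_gen (Gi i \<union> {X (\<ee> i), inverse (X (\<ee> i))})"
    using Xp_L[unfolded Lr_eq] by (auto intro: subring_gen.gen)
qed

lemma A_sub_M: "Ai \<subseteq> L_mut_ring m n t X h d B i"
  unfolding Lm_eq
proof (rule sg_sub)
  show "Gi i \<union> {X (\<ee> i), Xq} \<subseteq> subring_gen (Gi i \<union> {Xq, inverse Xq})"
    using Xi_M by (auto intro: subring_gen.gen)
qed

lemma RT: "subring_gen (Gi i) \<subseteq> Tp i (\<lambda>z. z = 0)"
proof (rule sg_closed)
  show "Gi i \<subseteq> Tp i (\<lambda>z. z = 0)"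
  proof
    fix g assume g: "g \<in> Gi i"
    consider "g = t" | "g = inverse t" | c where "c \<in> lattice m" "c i = 0" "g = X c"
      using Gi_cases[OF g] by blast
    thus "g \<in> Tp i (\<lambda>z. z = 0)"
    proof cases
      case 1 thus ?thesis using tpow_Tp[of 1 i] by simp
    next
      case 2 thus ?thesis using tpow_Tp[of "-1" i] by (simp add: power_int_minus)
    next
      case 3 thus ?thesis using Tp_mono[OF 3(1), where P="\<lambda>z. z = 0" and j=i and k=0] by simp
    qed
  qed
  show "1 \<in> Tp i (\<lambda>z. z = 0)" using tpow_Tp[of 0 i] by simp
  show "x - y \<in> Tp i (\<lambda>z. z = 0)" if "x \<in> Tp i (\<lambda>z. z = 0)" "y \<in> Tp i (\<lambda>z. z = 0)" for x y
    using Tp_diff that .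
  show "x * y \<in> Tp i (\<lambda>z. z = 0)" if "x \<in> Tp i (\<lambda>z. z = 0)" "y \<in> Tp i (\<lambda>z. z = 0)" for x y
    using that by (rule Tp_mult) simp
qed

lemma XiT: "X (\<ee> i) powi a \<in> Tp i (\<lambda>z. z = a)"
proof -
  have x1: "X (\<ee> i) \<in> Tp i (\<lambda>z. z = 1)"
    using Tp_mono[OF unit_lattice[OF im], where P="\<lambda>z. z = 1" and j=i and k=0] by (simp add: unitvec_def)
  have x2: "inverse (X (\<ee> i)) \<in> Tp i (\<lambda>z. z = -1)"
    using Tp_mono[OF lattice_uminus[OF unit_lattice[OF im]], where P="\<lambda>z. z = -1" and j=i and k=0]
      X_neg_unit[OF im] by (simp add: unitvec_def)
  show ?thesis
  proof (cases "a \<ge> 0")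
    case True
    have "X (\<ee> i) ^ nat a \<in> Tp i (\<lambda>z. z = int (nat a) * 1)" by (rule pow_Tp[OF x1])
    thus ?thesis using True by (simp add: power_int_def)
  next
    case False
    have "inverse (X (\<ee> i)) ^ nat (- a) \<in> Tp i (\<lambda>z. z = int (nat (- a)) * -1)" by (rule pow_Tp[OF x2])
    thus ?thesis using False by (simp add: power_int_def)
  qed
qed

lemma nfloc_R: assumes Y0: "Y \<noteq> 0" and qc: "\<And>c. c \<in> lattice m \<Longrightarrow> c i = 0 \<Longrightarrow> \<exists>j. X c * Y = t powi j * Y * X c"
  shows "nfloc (subring_gen (Gi i)) Y"
proof (rule nfloc.intro)
  show "Y \<noteq> 0" by (rule Y0)
  show "1 \<in> subring_gen (Gi i)" by (rule subring_gen.one)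
  show "x - y \<in> subring_gen (Gi i)" if "x \<in> subring_gen (Gi i)" "y \<in> subring_gen (Gi i)" for x y
    using that by (rule subring_gen.diff)
  show "x * y \<in> subring_gen (Gi i)" if "x \<in> subring_gen (Gi i)" "y \<in> subring_gen (Gi i)" for x y
    using that by (rule subring_gen.mult)
  show "Y * x * inverse Y \<in> subring_gen (Gi i)" if "x \<in> subring_gen (Gi i)" for x
    using conjR[OF Y0 qc] that by blast
  show "inverse Y * x * Y \<in> subring_gen (Gi i)" if "x \<in> subring_gen (Gi i)" for x
    using conjR[OF Y0 qc] that by blast
qed

lemma main_sub: assumes yL: "y \<in> L_ring m n t X" and yM: "y \<in> L_mut_ring m n t X h d B i"
  shows "y \<in> Ai"
proof -
  let ?R = "subring_gen (Gi i)"
  interpret NX: nfloc ?R "X (\<ee> i)"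
    by (rule nfloc_R[OF X_ne0[OF unit_lattice[OF im]]]) (use Xcomm[OF _ unit_lattice[OF im]] in blast)
  interpret NY: nfloc ?R Xq
    by (rule nfloc_R[OF Xp_ne0]) (use qc_Xp in blast)
  have RA: "?R \<subseteq> Ai" by (rule sg_mono) auto
  have XA: "X (\<ee> i) \<in> Ai" "Xq \<in> Ai" by (auto intro: subring_gen.gen)
  have GR: "Gi i \<subseteq> ?R" by (auto intro: subring_gen.gen)
  have "y \<in> NF ?R Xq" using yM NY.sg_NF[OF GR] Lm_eq by auto
  then obtain F c where F: "y = (\<Sum>b\<in>F. c b * Xq powi b)" "finite F" "\<forall>b\<in>F. c b \<in> ?R"
    unfolding NF_def by blast
  define p where "p = (\<Sum>b\<in>F \<inter> {b. 0 \<le> b}. c b * Xq powi b)"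
  define z where "z = (\<Sum>b\<in>F - {b. 0 \<le> b}. c b * Xq powi b)"
  have ypz: "y = p + z" unfolding F(1) p_def z_def by (rule sum.Int_Diff[OF F(2)])
  have pA: "p \<in> Ai" unfolding p_def
  proof (rule sg_sum)
    fix b assume b: "b \<in> F \<inter> {b. 0 \<le> b}"
    hence "Xq powi b = Xq ^ nat b" by (simp add: power_int_def)
    thus "c b * Xq powi b \<in> Ai" using F(3) b RA XA by (auto intro!: subring_gen.mult sg_pow)
  qed (use F(2) in auto)
  have zL: "z \<in> L_ring m n t X"
  proof -
    have "z = y - p" using ypz by simp
    moreover have "p \<in> L_ring m n t X" using pA A_sub_L by blast
    ultimately show ?thesis using yL unfolding L_ring_def by (simp add: subring_gen.diff)
  qed
  have "z \<in> NF ?R (X (\<ee> i))" using zL NX.sg_NF[OF GR] Lr_eq by auto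
  then obtain G e where G: "z = (\<Sum>a\<in>G. e a * X (\<ee> i) powi a)" "finite G" "\<forall>a\<in>G. e a \<in> ?R"
    unfolding NF_def by blast
  define N where "N = (\<Sum>b\<in>F. nat \<bar>b\<bar>)"
  have Nb: "nat \<bar>b\<bar> \<le> N" if "b \<in> F" for b unfolding N_def using F(2) that by (intro member_le_sum) auto
  have YN: "Xq ^ N \<in> Tp i (\<lambda>z. z = int N * -1)" by (rule pow_Tp[OF Xp_Tp])
  have Yne: "Xq ^ N \<noteq> 0" using Xp_ne0 by simp
  have zN: "z * Xq ^ N \<in> Tp i (\<lambda>k. 1 - int N \<le> k)"
  proof -
    have "z * Xq ^ N = (\<Sum>b\<in>F - {b. 0 \<le> b}. c b * (Xq powi b * Xq ^ N))"
      unfolding z_def by (simp add: sum_distrib_right mult.assoc)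
    also have "\<dots> \<in> Tp i (\<lambda>k. 1 - int N \<le> k)"
    proof (rule Tp_sum)
      fix b assume b: "b \<in> F - {b. 0 \<le> b}"
      have bN: "- b \<le> int N" using Nb[of b] b by auto
      have "Xq powi b * Xq ^ N = Xq powi b * Xq powi (int N)" by simp
      also have "\<dots> = Xq powi (b + int N)" using Xp_ne0 by (simp add: power_int_add)
      also have "\<dots> = Xq ^ nat (b + int N)" using bN by (simp add: power_int_def)
      finally have e1: "Xq powi b * Xq ^ N = Xq ^ nat (b + int N)" .
      have t1: "Xq ^ nat (b + int N) \<in> Tp i (\<lambda>z. z = int (nat (b + int N)) * -1)" by (rule pow_Tp[OF Xp_Tp])
      have t0: "c b \<in> Tp i (\<lambda>z. z = 0)" using RT F(3) b by auto
      show "c b * (Xq powi b * Xq ^ N) \<in> Tp i (\<lambda>k. 1 - int N \<le> k)"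
        unfolding e1 using t0 t1 by (rule Tp_mult) (use b bN in auto)
    qed (simp add: F(2))
    finally show ?thesis .
  qed
  define zp where "zp = (\<Sum>a\<in>G \<inter> {a. 0 < a}. e a * X (\<ee> i) powi a)"
  define zm where "zm = (\<Sum>a\<in>G - {a. 0 < a}. e a * X (\<ee> i) powi a)"
  have zpm: "z = zp + zm" unfolding G(1) zp_def zm_def by (rule sum.Int_Diff[OF G(2)])
  have zpT: "zp * Xq ^ N \<in> Tp i (\<lambda>k. 1 - int N \<le> k)" unfolding zp_def sum_distrib_right
  proof (rule Tp_sum)
    fix a assume a: "a \<in> G \<inter> {a. 0 < a}"
    have t0: "e a \<in> Tp i (\<lambda>z. z = 0)" using RT G(3) a by auto
    have "e a * X (\<ee> i) powi a \<in> Tp i (\<lambda>z. z = a)" using t0 XiT by (rule Tp_mult) simp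
    thus "e a * X (\<ee> i) powi a * Xq ^ N \<in> Tp i (\<lambda>k. 1 - int N \<le> k)" using YN by (rule Tp_mult) (use a in auto)
  qed (simp add: G(2))
  have zmT: "zm * Xq ^ N \<in> Tp i (\<lambda>k. k \<le> - int N)" unfolding zm_def sum_distrib_right
  proof (rule Tp_sum)
    fix a assume a: "a \<in> G - {a. 0 < a}"
    have t0: "e a \<in> Tp i (\<lambda>z. z = 0)" using RT G(3) a by auto
    have "e a * X (\<ee> i) powi a \<in> Tp i (\<lambda>z. z = a)" using t0 XiT by (rule Tp_mult) simp
    thus "e a * X (\<ee> i) powi a * Xq ^ N \<in> Tp i (\<lambda>k. k \<le> - int N)" using YN by (rule Tp_mult) (use a in auto)
  qed (simp add: G(2))
  have "zm * Xq ^ N = z * Xq ^ N - zp * Xq ^ N" using zpm by (simp add: algebra_simps)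
  hence zmT2: "zm * Xq ^ N \<in> Tp i (\<lambda>k. 1 - int N \<le> k)" using Tp_diff[OF zN zpT] by simp
  have "zm * Xq ^ N = 0" by (rule Tp_disj[OF zmT zmT2]) auto
  hence "zm = 0" using Yne Xp_ne0 by simp
  hence zz: "z = zp" using zpm by simp
  have "zp \<in> Ai" unfolding zp_def
  proof (rule sg_sum)
    fix a assume a: "a \<in> G \<inter> {a. 0 < a}"
    hence "X (\<ee> i) powi a = X (\<ee> i) ^ nat a" by (simp add: power_int_def)
    thus "e a * X (\<ee> i) powi a \<in> Ai" using G(3) a RA XA by (auto intro!: subring_gen.mult sg_pow)
  qed (use G(2) in auto)
  thus ?thesis using ypz pA zz sg_add by simp
qed

end

end

theorem proposition4p2:
  fixes m n :: nat and t :: "'f::division_ring" and X :: "(nat \<Rightarrow> int) \<Rightarrow> 'f"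
    and h :: "nat \<Rightarrow> nat \<Rightarrow> 'f" and d :: "nat \<Rightarrow> nat"
    and L B :: "nat \<Rightarrow> nat \<Rightarrow> int"
  assumes "quantum_seed m n t X h d L B"
  shows "upper_bound m n t X h d B =
    (\<Inter>i\<in>{1..n}. subring_gen (ZP_gens m n t X \<union>
        (\<Union>k\<in>{1..n} - {i}. {X (\<ee> k), inverse (X (\<ee> k))}) \<union>
        {X (\<ee> i), mutated_var m X h d B i}))"
proof -
  interpret qseed m n t X h d L B by unfold_locales (rule assms)
  have eq: "subring_gen (ZP_gens m n t X \<union>
        (\<Union>k\<in>{1..n} - {i}. {X (\<ee> k), inverse (X (\<ee> k))}) \<union>
        {X (\<ee> i), mutated_var m X h d B i}) = subring_gen (Gi i \<union> {X (\<ee> i), mutated_var m X h d B i})" for i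
    by (simp add: Gi_def)
  show ?thesis unfolding eq
  proof
    show "upper_bound m n t X h d B \<subseteq> (\<Inter>i\<in>{1..n}. subring_gen (Gi i \<union> {X (\<ee> i), mutated_var m X h d B i}))"
      unfolding upper_bound_def using main_sub by blast
    show "(\<Inter>i\<in>{1..n}. subring_gen (Gi i \<union> {X (\<ee> i), mutated_var m X h d B i})) \<subseteq> upper_bound m n t X h d B"
    proof
      fix y assume y: "y \<in> (\<Inter>i\<in>{1..n}. subring_gen (Gi i \<union> {X (\<ee> i), mutated_var m X h d B i}))"
      have one: "1 \<in> {1..n}" using nm by simp
      have "y \<in> L_ring m n t X" using y A_sub_L[OF one] one by blast
      moreover have "y \<in> L_mut_ring m n t X h d B i" if "i \<in> {1..n}" for i
        using y A_sub_M[OF that] that by blast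
      ultimately show "y \<in> upper_bound m n t X h d B" unfolding upper_bound_def by blast
    qed
  qed
qed


end
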